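(* Let $G$ be a finite group. (1) Write $G/G'=\{g_0G',\ldots,g_kG'\}$ with the cosets pairwise distinct. Then for each $i\in[0,k]$ there exists $S_i\in\mathcal F(G)$ with $\pi(S_i)=g_iG'$. For any such choice of $S_0,\dots,S_k$, the set $\mathcal C=\{[S_i]:i\in[0,k]\}$ is a subgroup of $\mathcal C(\mathcal B(G),\mathcal F(G))$ and the map $G/G'\to\mathcal C$, $g_iG'\mapsto[S_i]$, is a group isomorphism (so the class semigroup contains a subgroup isomorphic to $G/G'$, the class group of the complete integral closure of $\mathcal B(G)$). Moreover, $[S\boldsymbol{\cdot}S_i]\in\mathcal C$ for every $i\in[0,k]$ and every $S\in\mathcal F(G)$. (2) The map $\mathsf Z(G)\to\mathcal C(\mathcal B(G),\mathcal F(G))^\times$, $g\mapsto[g]$, is a group isomorphism onto the group of invertible elements of the class semigroup.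
   Context: Let $G$ be a finite group written multiplicatively with identity $1_G$; $G'$ is its commutator subgroup and $\mathsf Z(G)$ its center. $\mathcal F(G)$ is the free abelian monoid with basis $G$; its elements are sequences $S=g_1\boldsymbol{\cdot}\ldots\boldsymbol{\cdot}g_\ell$ (operation $\boldsymbol{\cdot}$ = concatenation, identity the empty sequence $1_{\mathcal F(G)}$; an element $g\in G$ is also viewed as a one-term sequence). $\pi(S)=\{g_{\tau(1)}\cdots g_{\tau(\ell)}:\tau\text{ a permutation of }[1,\ell]\}$, $\pi(1_{\mathcal F(G)})=\{1_G\}$, and $\mathcal B(G)=\{S\in\mathcal F(G):1_G\in\pi(S)\}$. For $S,S'\in\mathcal F(G)$, $S\sim S'$ means: for all $T\in\mathcal F(G)$, $S\boldsymbol{\cdot}T\in\mathcal B(G)\iff S'\boldsymbol{\cdot}T\in\mathcal B(G)$; this is a congruence, $[S]$ is the class of $S$, and the class semigroup $\mathcal C(\mathcal B(G),\mathcal F(G))$ is the set of classes, written additively with $[S]+[T]=[S\boldsymbol{\cdot}T]$ and zero $[1_{\mathcal F(G)}]$. *)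

theory Defs
  imports "HOL-Algebra.Algebra" "HOL-Library.Multiset"
begin

abbreviation commutator_subgroup :: "('a, 'b) monoid_scheme \<Rightarrow> 'a set" where
  "commutator_subgroup G \<equiv> derived G (carrier G)"

definition grp_center :: "('a, 'b) monoid_scheme \<Rightarrow> 'a set" where
  "grp_center G = {z \<in> carrier G. \<forall>g \<in> carrier G. z \<otimes>\<^bsub>G\<^esub> g = g \<otimes>\<^bsub>G\<^esub> z}"

definition seqs :: "('a, 'b) monoid_scheme \<Rightarrow> 'a multiset set" where
  "seqs G = {S. set_mset S \<subseteq> carrier G}"

definition seq_prods :: "('a, 'b) monoid_scheme \<Rightarrow> 'a multiset \<Rightarrow> 'a set" where
  "seq_prods G S = {foldr (\<otimes>\<^bsub>G\<^esub>) xs \<one>\<^bsub>G\<^esub> | xs. mset xs = S}"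

definition prod_one_seqs :: "('a, 'b) monoid_scheme \<Rightarrow> 'a multiset set" where
  "prod_one_seqs G = {S \<in> seqs G. \<one>\<^bsub>G\<^esub> \<in> seq_prods G S}"

definition seq_equiv :: "('a, 'b) monoid_scheme \<Rightarrow> 'a multiset \<Rightarrow> 'a multiset \<Rightarrow> bool" where
  "seq_equiv G S S' \<longleftrightarrow> (\<forall>T \<in> seqs G. S + T \<in> prod_one_seqs G \<longleftrightarrow> S' + T \<in> prod_one_seqs G)"

definition seq_class :: "('a, 'b) monoid_scheme \<Rightarrow> 'a multiset \<Rightarrow> 'a multiset set" where
  "seq_class G S = {S' \<in> seqs G. seq_equiv G S S'}"

definition class_add :: "('a, 'b) monoid_scheme \<Rightarrow> 'a multiset set \<Rightarrow> 'a multiset set \<Rightarrow> 'a multiset set" where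
  "class_add G A B = seq_class G ((SOME s. s \<in> A) + (SOME t. t \<in> B))"

definition class_semigroup :: "('a, 'b) monoid_scheme \<Rightarrow> 'a multiset set monoid" where
  "class_semigroup G = \<lparr>carrier = seq_class G ` seqs G, monoid.mult = class_add G, one = seq_class G {#}\<rparr>"

end

theory Submission
  imports Defs
begin


context group begin

definition prodl :: "'a list \<Rightarrow> 'a" where "prodl xs = foldr (\<otimes>) xs \<one>"

lemma prodl_simps[simp]: "prodl [] = \<one>" "prodl (x#xs) = x \<otimes> prodl xs"
  by (simp_all add: prodl_def)

lemma prodl_closed[simp]: "set xs \<subseteq> carrier G \<Longrightarrow> prodl xs \<in> carrier G"
  by (induction xs) auto

lemma prodl_append: "set xs \<subseteq> carrier G \<Longrightarrow> set ys \<subseteq> carrier G \<Longrightarrow> prodl (xs @ ys) = prodl xs \<otimes> prodl ys"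
  by (induction xs) (auto simp: m_assoc)

lemma seq_prods_iff: "x \<in> seq_prods G S \<longleftrightarrow> (\<exists>xs. mset xs = S \<and> x = prodl xs)"
  by (auto simp: seq_prods_def prodl_def)

lemma seqs_add[simp]: "S + T \<in> seqs G \<longleftrightarrow> S \<in> seqs G \<and> T \<in> seqs G"
  by (auto simp: seqs_def)

lemma seqs_empty[simp]: "{#} \<in> seqs G" by (simp add: seqs_def)
lemma seqs_single[simp]: "{#x#} \<in> seqs G \<longleftrightarrow> x \<in> carrier G" by (simp add: seqs_def)
lemma seqs_add_mset[simp]: "add_mset x S \<in> seqs G \<longleftrightarrow> x \<in> carrier G \<and> S \<in> seqs G" by (simp add: seqs_def)

lemma seqs_set: "S \<in> seqs G \<Longrightarrow> mset xs = S \<Longrightarrow> set xs \<subseteq> carrier G"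
  by (auto simp: seqs_def dest: arg_cong[where f=set_mset])

lemma seq_prods_carrier: "S \<in> seqs G \<Longrightarrow> seq_prods G S \<subseteq> carrier G"
  using seqs_set by (auto simp: seq_prods_iff)

lemma seq_prods_ne: "\<exists>x. x \<in> seq_prods G S"
  using ex_mset[of S] by (auto simp: seq_prods_iff)

lemma seq_prods_empty[simp]: "seq_prods G {#} = {\<one>}"
  by (auto simp: seq_prods_iff)

lemma seq_prods_single[simp]: "x \<in> carrier G \<Longrightarrow> seq_prods G {#x#} = {x}"
  by (auto simp: seq_prods_iff)

lemma seq_prods_add: "S \<in> seqs G \<Longrightarrow> T \<in> seqs G \<Longrightarrow> a \<in> seq_prods G S \<Longrightarrow> b \<in> seq_prods G T
   \<Longrightarrow> a \<otimes> b \<in> seq_prods G (S + T)"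
  unfolding seq_prods_iff
proof (elim exE conjE)
  fix xs ys assume h: "S \<in> seqs G" "T \<in> seqs G" "mset xs = S" "a = prodl xs" "mset ys = T" "b = prodl ys"
  then have "mset (xs @ ys) = S + T" "a \<otimes> b = prodl (xs @ ys)"
    using prodl_append seqs_set by auto
  then show "\<exists>zs. mset zs = S + T \<and> a \<otimes> b = prodl zs" by blast
qed

lemma B_iff: "S \<in> prod_one_seqs G \<longleftrightarrow> S \<in> seqs G \<and> \<one> \<in> seq_prods G S"
  by (simp add: prod_one_seqs_def)

lemma equiv_refl: "seq_equiv G S S" by (simp add: seq_equiv_def)
lemma equiv_sym: "seq_equiv G S T \<Longrightarrow> seq_equiv G T S" by (simp add: seq_equiv_def)
lemma equiv_trans: "seq_equiv G S T \<Longrightarrow> seq_equiv G T U \<Longrightarrow> seq_equiv G S U" by (simp add: seq_equiv_def)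

lemma class_eq_iff: "S \<in> seqs G \<Longrightarrow> T \<in> seqs G \<Longrightarrow> seq_class G S = seq_class G T \<longleftrightarrow> seq_equiv G S T"
proof
  assume h: "S \<in> seqs G" "T \<in> seqs G" "seq_class G S = seq_class G T"
  have "T \<in> seq_class G T" using h by (simp add: seq_class_def equiv_refl)
  then have "T \<in> seq_class G S" using h by simp
  then show "seq_equiv G S T" by (simp add: seq_class_def)
next
  assume h: "seq_equiv G S T"
  show "seq_class G S = seq_class G T"
    unfolding seq_class_def using h equiv_sym equiv_trans by blast
qed

lemma equiv_cong:
  assumes "S \<in> seqs G" "T \<in> seqs G" "S' \<in> seqs G" "T' \<in> seqs G" "seq_equiv G S S'" "seq_equiv G T T'"
  shows "seq_equiv G (S + T) (S' + T')"
  unfolding seq_equiv_def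
proof
  fix U assume U: "U \<in> seqs G"
  have "S + T + U \<in> prod_one_seqs G \<longleftrightarrow> S' + (T + U) \<in> prod_one_seqs G"
    using assms(5) U assms by (simp add: seq_equiv_def add.assoc)
  also have "\<dots> \<longleftrightarrow> T + (S' + U) \<in> prod_one_seqs G" by (simp add: ac_simps)
  also have "\<dots> \<longleftrightarrow> T' + (S' + U) \<in> prod_one_seqs G"
    using assms(6) U assms by (simp add: seq_equiv_def)
  also have "\<dots> \<longleftrightarrow> S' + T' + U \<in> prod_one_seqs G" by (simp add: ac_simps)
  finally show "S + T + U \<in> prod_one_seqs G \<longleftrightarrow> S' + T' + U \<in> prod_one_seqs G" .
qed

lemma class_add_eq:
  assumes "S \<in> seqs G" "T \<in> seqs G"
  shows "class_add G (seq_class G S) (seq_class G T) = seq_class G (S + T)"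
proof -
  have "S \<in> seq_class G S" "T \<in> seq_class G T" using assms by (auto simp: seq_class_def equiv_refl)
  then have s: "(SOME s. s \<in> seq_class G S) \<in> seq_class G S" and t: "(SOME s. s \<in> seq_class G T) \<in> seq_class G T"
    by (meson someI)+
  have s': "(SOME s. s \<in> seq_class G S) \<in> seqs G" "seq_equiv G S (SOME s. s \<in> seq_class G S)"
    using s by (simp_all add: seq_class_def)
  have t': "(SOME s. s \<in> seq_class G T) \<in> seqs G" "seq_equiv G T (SOME s. s \<in> seq_class G T)"
    using t by (simp_all add: seq_class_def)
  have "seq_equiv G ((SOME s. s \<in> seq_class G S) + (SOME s. s \<in> seq_class G T)) (S + T)"
    by (rule equiv_cong) (use s' t' assms equiv_sym in auto)
  then show ?thesis unfolding class_add_def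
    using s' t' assms by (subst class_eq_iff) auto
qed

lemma equiv_by_prods:
  assumes "S \<in> seqs G" "S' \<in> seqs G" "\<And>T. T \<in> seqs G \<Longrightarrow> seq_prods G (S + T) = seq_prods G (S' + T)"
  shows "seq_equiv G S S'"
  unfolding seq_equiv_def B_iff using assms by simp

end



context comm_monoid begin
lemma foldr_app: "set xs \<subseteq> carrier G \<Longrightarrow> set ys \<subseteq> carrier G \<Longrightarrow>
  foldr (\<otimes>) (xs @ ys) \<one> = foldr (\<otimes>) xs \<one> \<otimes> foldr (\<otimes>) ys \<one>"
proof (induction xs)
  case Nil
  have "foldr (\<otimes>) ys \<one> \<in> carrier G" using Nil(2) by (induction ys) auto
  then show ?case by simp
next
  case (Cons a xs)
  have "foldr (\<otimes>) ys \<one> \<in> carrier G" using Cons(3) by (induction ys) auto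
  moreover have "foldr (\<otimes>) xs \<one> \<in> carrier G" using Cons(2) by (induction xs) auto
  ultimately show ?case using Cons by (simp add: m_assoc)
qed

lemma foldr_closed': "set xs \<subseteq> carrier G \<Longrightarrow> foldr (\<otimes>) xs \<one> \<in> carrier G"
  by (induction xs) auto

lemma foldr_perm: "mset xs = mset ys \<Longrightarrow> set xs \<subseteq> carrier G \<Longrightarrow> foldr (\<otimes>) xs \<one> = foldr (\<otimes>) ys \<one>"
proof (induction xs arbitrary: ys)
  case Nil then show ?case by simp
next
  case (Cons x xs)
  have "x \<in> set ys" using Cons(2) by (metis list.set_intros(1) set_mset_mset)
  then obtain ys1 ys2 where ys: "ys = ys1 @ x # ys2" by (meson split_list)
  have m: "mset xs = mset (ys1 @ ys2)" using Cons(2) ys by simp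
  have sy: "set ys \<subseteq> carrier G" using Cons(2,3) by (metis set_mset_mset)
  then have s1: "set ys1 \<subseteq> carrier G" "set ys2 \<subseteq> carrier G" "x \<in> carrier G" using ys by auto
  have "foldr (\<otimes>) ys \<one> = foldr (\<otimes>) ys1 \<one> \<otimes> (x \<otimes> foldr (\<otimes>) ys2 \<one>)"
    using ys s1 foldr_app[of ys1 "x # ys2"] by simp
  also have "\<dots> = x \<otimes> (foldr (\<otimes>) ys1 \<one> \<otimes> foldr (\<otimes>) ys2 \<one>)"
    using s1 foldr_closed' by (simp add: m_lcomm)
  also have "\<dots> = x \<otimes> foldr (\<otimes>) xs \<one>"
    using Cons.IH[OF m] Cons(3) s1 foldr_app[of ys1 ys2] by simp
  finally show ?case by simp
qed
end

context group begin

abbreviation DD where "DD \<equiv> derived G (carrier G)"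

lemma DD_normal: "DD \<lhd> G" by (rule derived_self_is_normal)
lemma DD_sub: "subgroup DD G" using DD_normal normal_def by blast

lemma coset_prodl: "set xs \<subseteq> carrier G \<Longrightarrow>
   DD #> prodl xs = foldr (\<otimes>\<^bsub>G Mod DD\<^esub>) (map (\<lambda>a. DD #> a) xs) \<one>\<^bsub>G Mod DD\<^esub>"
proof (induction xs)
  case Nil then show ?case
    using coset_mult_one[OF subgroup.subset[OF DD_sub]] by simp
next
  case (Cons a xs)
  then show ?case using normal.rcos_sum[OF DD_normal, of a "prodl xs", symmetric] by simp
qed

lemma coset_perm: "mset xs = mset ys \<Longrightarrow> set xs \<subseteq> carrier G \<Longrightarrow> DD #> prodl xs = DD #> prodl ys"
proof -
  assume h: "mset xs = mset ys" "set xs \<subseteq> carrier G"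
  then have hy: "set ys \<subseteq> carrier G" by (metis set_mset_mset)
  interpret Q: comm_group "G Mod DD" by (rule derived_quot_is_comm_group)
  have c: "set (map (\<lambda>a. DD #> a) xs) \<subseteq> carrier (G Mod DD)"
    using h(2) by (auto simp: carrier_FactGroup)
  show ?thesis
    using coset_prodl[OF h(2)] coset_prodl[OF hy] Q.foldr_perm[OF _ c] h by simp
qed

lemma prods_in_coset: "S \<in> seqs G \<Longrightarrow> x \<in> seq_prods G S \<Longrightarrow> seq_prods G S \<subseteq> DD #> x"
proof
  fix y assume h: "S \<in> seqs G" "x \<in> seq_prods G S" "y \<in> seq_prods G S"
  then obtain xs ys where xs: "mset xs = S" "x = prodl xs" and ys: "mset ys = S" "y = prodl ys"
    by (auto simp: seq_prods_iff)
  have "DD #> y = DD #> x" using coset_perm[of ys xs] xs ys seqs_set[OF h(1)] by simp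
  moreover have "y \<in> DD #> y" using rcos_self[OF _ DD_sub] ys seqs_set[OF h(1)] by simp
  ultimately show "y \<in> DD #> x" by simp
qed

lemma full_coset_add:
  assumes S: "S \<in> seqs G" "g \<in> carrier G" "seq_prods G S = DD #> g" and T: "T \<in> seqs G" "t \<in> seq_prods G T"
  shows "seq_prods G (S + T) = DD #> (g \<otimes> t)"
proof
  have tc: "t \<in> carrier G" using seq_prods_carrier[OF T(1)] T(2) by blast
  have "g \<in> seq_prods G S" using S(3) rcos_self[OF S(2) DD_sub] by simp
  then have "g \<otimes> t \<in> seq_prods G (S + T)" using seq_prods_add[OF S(1) T(1) _ T(2)] by blast
  then show "seq_prods G (S + T) \<subseteq> DD #> (g \<otimes> t)" using prods_in_coset[of "S + T" "g \<otimes> t"] S(1) T(1) seqs_add by blast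
  show "DD #> (g \<otimes> t) \<subseteq> seq_prods G (S + T)"
  proof
    fix y assume "y \<in> DD #> (g \<otimes> t)"
    then obtain d where d: "d \<in> DD" "y = d \<otimes> (g \<otimes> t)" unfolding r_coset_def by blast
    have dc: "d \<in> carrier G" using subgroup.mem_carrier[OF DD_sub d(1)] .
    have "d \<otimes> g \<in> DD #> g" using d unfolding r_coset_def by blast
    then have "(d \<otimes> g) \<otimes> t \<in> seq_prods G (S + T)" using seq_prods_add[OF S(1) T(1) _ T(2)] S(3) by simp
    then show "y \<in> seq_prods G (S + T)" using d dc tc S by (simp add: m_assoc)
  qed
qed

lemma full_coset_B:
  assumes S: "S \<in> seqs G" "g \<in> carrier G" "seq_prods G S = DD #> g" and T: "T \<in> seqs G" "t \<in> seq_prods G T"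
  shows "S + T \<in> prod_one_seqs G \<longleftrightarrow> g \<otimes> t \<in> DD"
proof -
  have tc: "t \<in> carrier G" using T seq_prods_carrier by blast
  have gt: "g \<otimes> t \<in> carrier G" using tc S(2) by simp
  have "\<one> \<in> DD #> (g \<otimes> t) \<longleftrightarrow> \<one> \<otimes> inv (g \<otimes> t) \<in> DD"
    by (rule subgroup.rcos_module[OF DD_sub is_group gt one_closed])
  also have "\<dots> \<longleftrightarrow> inv (g \<otimes> t) \<in> DD" using gt by simp
  also have "\<dots> \<longleftrightarrow> g \<otimes> t \<in> DD"
    by (metis DD_sub gt inv_inv subgroup.m_inv_closed)
  finally have "\<one> \<in> DD #> (g \<otimes> t) \<longleftrightarrow> g \<otimes> t \<in> DD" .
  then show ?thesis using full_coset_add[OF assms] S T by (simp add: B_iff)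
qed

lemma full_coset_equiv:
  assumes "S \<in> seqs G" "S' \<in> seqs G" "g \<in> carrier G" "seq_prods G S = DD #> g" "seq_prods G S' = DD #> g"
  shows "seq_equiv G S S'"
proof (rule equiv_by_prods[OF assms(1,2)])
  fix T assume T: "T \<in> seqs G"
  obtain t where t: "t \<in> seq_prods G T" using seq_prods_ne by blast
  show "seq_prods G (S + T) = seq_prods G (S' + T)"
    using full_coset_add[OF assms(1,3,4) T t] full_coset_add[OF assms(2,3,5) T t] by simp
qed

end


context group begin

definition quad :: "'a \<Rightarrow> 'a \<Rightarrow> 'a multiset" where
  "quad a b = {#a, b, inv a, inv b#}"

lemma quad_seqs: "a \<in> carrier G \<Longrightarrow> b \<in> carrier G \<Longrightarrow> quad a b \<in> seqs G"
  by (simp add: quad_def)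

lemma quad_one: "a \<in> carrier G \<Longrightarrow> b \<in> carrier G \<Longrightarrow> \<one> \<in> seq_prods G (quad a b)"
proof -
  assume ab: "a \<in> carrier G" "b \<in> carrier G"
  have "mset [a, inv a, b, inv b] = quad a b" by (simp add: quad_def add_mset_commute)
  moreover have "prodl [a, inv a, b, inv b] = \<one>" using ab by (simp add: m_assoc[symmetric])
  ultimately show ?thesis unfolding seq_prods_iff by metis
qed

lemma quad_comm: "a \<in> carrier G \<Longrightarrow> b \<in> carrier G \<Longrightarrow> a \<otimes> b \<otimes> inv a \<otimes> inv b \<in> seq_prods G (quad a b)"
proof -
  assume ab: "a \<in> carrier G" "b \<in> carrier G"
  have "mset [a, b, inv a, inv b] = quad a b" by (simp add: quad_def add_mset_commute)
  moreover have "prodl [a, b, inv a, inv b] = a \<otimes> b \<otimes> inv a \<otimes> inv b" using ab by (simp add: m_assoc)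
  ultimately show ?thesis unfolding seq_prods_iff by metis
qed

lemma sum_one:
  assumes "finite F" "\<And>p. p \<in> F \<Longrightarrow> f p \<in> seqs G \<and> \<one> \<in> seq_prods G (f p)"
  shows "sum f F \<in> seqs G \<and> \<one> \<in> seq_prods G (sum f F)"
  using assms
proof (induction F rule: finite_induct)
  case empty then show ?case by simp
next
  case (insert x F)
  then have h: "f x \<in> seqs G" "\<one> \<in> seq_prods G (f x)" "sum f F \<in> seqs G" "\<one> \<in> seq_prods G (sum f F)"
    by auto
  have "\<one> \<otimes> \<one> \<in> seq_prods G (f x + sum f F)" by (rule seq_prods_add[OF h(1) h(3) h(2) h(4)])
  then show ?case using insert(1,2) h by simp
qed

definition WW :: "'a multiset" where
  "WW = (\<Sum>p\<in>carrier G \<times> carrier G. quad (fst p) (snd p))"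

lemma WW_props:
  assumes fin: "finite (carrier G)"
  shows "WW \<in> seqs G" "\<one> \<in> seq_prods G WW" "derived_set G (carrier G) \<subseteq> seq_prods G WW"
proof -
  have fin2: "finite (carrier G \<times> carrier G)" using fin by simp
  have q: "\<And>p. p \<in> carrier G \<times> carrier G \<Longrightarrow> quad (fst p) (snd p) \<in> seqs G \<and> \<one> \<in> seq_prods G (quad (fst p) (snd p))"
    using quad_seqs quad_one by auto
  show "WW \<in> seqs G" "\<one> \<in> seq_prods G WW"
    using sum_one[OF fin2 q] by (simp_all add: WW_def)
  show "derived_set G (carrier G) \<subseteq> seq_prods G WW"
  proof
    fix c assume "c \<in> derived_set G (carrier G)"
    then obtain a b where ab: "a \<in> carrier G" "b \<in> carrier G" "c = a \<otimes> b \<otimes> inv a \<otimes> inv b" by blast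
    have r: "sum (\<lambda>p. quad (fst p) (snd p)) (carrier G \<times> carrier G - {(a, b)}) \<in> seqs G \<and>
         \<one> \<in> seq_prods G (sum (\<lambda>p. quad (fst p) (snd p)) (carrier G \<times> carrier G - {(a, b)}))"
      by (rule sum_one) (use fin2 q in auto)
    have W: "WW = quad a b + sum (\<lambda>p. quad (fst p) (snd p)) (carrier G \<times> carrier G - {(a, b)})"
      unfolding WW_def using ab fin2 by (subst sum.remove[of _ "(a, b)"]) auto
    have "c \<otimes> \<one> \<in> seq_prods G WW"
      unfolding W using seq_prods_add[OF quad_seqs[OF ab(1,2)] conjunct1[OF r] quad_comm[OF ab(1,2)] conjunct2[OF r]] ab
      by simp
    then show "c \<in> seq_prods G WW" using ab by simp
  qed
qed

lemma rep_props:
  assumes fin: "finite (carrier G)"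
  shows "repeat_mset k WW \<in> seqs G \<and> \<one> \<in> seq_prods G (repeat_mset k WW)"
proof (induction k)
  case 0 then show ?case by simp
next
  case (Suc k)
  have "\<one> \<otimes> \<one> \<in> seq_prods G (WW + repeat_mset k WW)"
    using seq_prods_add[OF WW_props(1)[OF fin] conjunct1[OF Suc] WW_props(2)[OF fin] conjunct2[OF Suc]] .
  then show ?case using Suc WW_props(1)[OF fin] by simp
qed

lemma rep_sub_DD:
  assumes fin: "finite (carrier G)"
  shows "seq_prods G (repeat_mset k WW) \<subseteq> DD"
  using prods_in_coset[of "repeat_mset k WW" \<one>] rep_props[OF fin, of k]
    coset_mult_one[OF subgroup.subset[OF DD_sub]] by simp

lemma rep_mono:
  assumes fin: "finite (carrier G)"
  shows "seq_prods G (repeat_mset k WW) \<subseteq> seq_prods G (repeat_mset (Suc k) WW)"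
proof
  fix x assume x: "x \<in> seq_prods G (repeat_mset k WW)"
  have xc: "x \<in> carrier G" using x seq_prods_carrier rep_props[OF fin, of k] by blast
  have "\<one> \<otimes> x \<in> seq_prods G (WW + repeat_mset k WW)"
    using seq_prods_add[OF WW_props(1)[OF fin] conjunct1[OF rep_props[OF fin, of k]] WW_props(2)[OF fin] x] .
  then show "x \<in> seq_prods G (repeat_mset (Suc k) WW)" using xc by simp
qed

lemma rep_step:
  assumes fin: "finite (carrier G)" and x: "x \<in> seq_prods G (repeat_mset k WW)"
    and c: "c \<in> derived_set G (carrier G)"
  shows "x \<otimes> c \<in> seq_prods G (repeat_mset (Suc k) WW)"
proof -
  have "x \<otimes> c \<in> seq_prods G (repeat_mset k WW + WW)"
    using seq_prods_add[OF conjunct1[OF rep_props[OF fin, of k]] WW_props(1)[OF fin] x] WW_props(3)[OF fin] c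
    by blast
  then show ?thesis by (simp add: add.commute)
qed

lemma rep_stable:
  assumes fin: "finite (carrier G)"
  shows "\<exists>m. seq_prods G (repeat_mset (Suc m) WW) \<subseteq> seq_prods G (repeat_mset m WW)"
proof (rule ccontr)
  assume "\<not> ?thesis"
  then have ps: "\<And>m. seq_prods G (repeat_mset m WW) \<subset> seq_prods G (repeat_mset (Suc m) WW)"
    using rep_mono[OF fin] by blast
  have finA: "\<And>m. finite (seq_prods G (repeat_mset m WW))"
    using rep_sub_DD[OF fin] subgroup.subset[OF DD_sub] fin by (meson finite_subset)
  have "k \<le> card (seq_prods G (repeat_mset k WW))" for k
  proof (induction k)
    case 0 then show ?case by simp
  next
    case (Suc k)
    have "card (seq_prods G (repeat_mset k WW)) < card (seq_prods G (repeat_mset (Suc k) WW))"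
      by (rule psubset_card_mono[OF finA ps])
    then show ?case using Suc by linarith
  qed
  moreover have "card (seq_prods G (repeat_mset k WW)) \<le> card (carrier G)" for k
    using rep_sub_DD[OF fin] subgroup.subset[OF DD_sub] fin by (meson card_mono subset_trans)
  ultimately have "Suc (card (carrier G)) \<le> card (carrier G)" by (meson le_trans)
  then show False by simp
qed

lemma comm_inv:
  assumes "a \<in> carrier G" "b \<in> carrier G"
  shows "inv (a \<otimes> b \<otimes> inv a \<otimes> inv b) = b \<otimes> a \<otimes> inv b \<otimes> inv a"
  using assms by (simp add: inv_mult_group m_assoc)

lemma exists_S0:
  assumes fin: "finite (carrier G)"
  shows "\<exists>S0. S0 \<in> seqs G \<and> seq_prods G S0 = DD"
proof -
  obtain m where m: "seq_prods G (repeat_mset (Suc m) WW) \<subseteq> seq_prods G (repeat_mset m WW)"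
    using rep_stable[OF fin] by blast
  define A where "A = seq_prods G (repeat_mset m WW)"
  have Ac: "A \<subseteq> carrier G" unfolding A_def using seq_prods_carrier rep_props[OF fin] by blast
  have step: "x \<otimes> c \<in> A" if "x \<in> A" "c \<in> derived_set G (carrier G)" for x c
    using rep_step[OF fin, of x m c] that m unfolding A_def by blast
  have Xc: "derived_set G (carrier G) \<subseteq> carrier G" by (rule derived_set_in_carrier) simp
  have gen: "\<forall>x\<in>A. x \<otimes> h \<in> A" if "h \<in> generate G (derived_set G (carrier G))" for h
    using that
  proof (induction rule: generate.induct)
    case one then show ?case using Ac by (metis r_one subsetD)
  next
    case (incl h) then show ?case using step by blast
  next
    case (inv h)
    then obtain a b where ab: "a \<in> carrier G" "b \<in> carrier G" "h = a \<otimes> b \<otimes> inv a \<otimes> inv b" by blast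
    have "inv h \<in> derived_set G (carrier G)" using ab comm_inv by blast
    then show ?case using step by blast
  next
    case (eng h1 h2)
    have h12: "h1 \<in> carrier G" "h2 \<in> carrier G"
      using generate_in_carrier[OF Xc eng(1)] generate_in_carrier[OF Xc eng(2)] by simp_all
    show ?case
    proof
      fix x assume x: "x \<in> A"
      then have xc: "x \<in> carrier G" using Ac by blast
      have "x \<otimes> h1 \<in> A" using eng(3) x by blast
      then have "x \<otimes> h1 \<otimes> h2 \<in> A" using eng(4) by blast
      then show "x \<otimes> (h1 \<otimes> h2) \<in> A" using xc h12 by (simp add: m_assoc)
    qed
  qed
  have "DD \<subseteq> A"
  proof
    fix h assume h: "h \<in> DD"
    then have "h \<in> generate G (derived_set G (carrier G))" by (simp add: derived_def)
    moreover have "\<one> \<in> A" unfolding A_def using rep_props[OF fin] by blast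
    ultimately have "\<one> \<otimes> h \<in> A" using gen by blast
    moreover have "h \<in> carrier G" using subgroup.mem_carrier[OF DD_sub h] .
    ultimately show "h \<in> A" by simp
  qed
  moreover have "A \<subseteq> DD" unfolding A_def by (rule rep_sub_DD[OF fin])
  ultimately show ?thesis using rep_props[OF fin, of m] unfolding A_def by blast
qed

lemma exists_coset_seq:
  assumes fin: "finite (carrier G)" and g: "g \<in> carrier G"
  shows "\<exists>S. S \<in> seqs G \<and> seq_prods G S = DD #> g"
proof -
  obtain S0 where S0: "S0 \<in> seqs G" "seq_prods G S0 = DD" using exists_S0[OF fin] by blast
  have S0': "seq_prods G S0 = DD #> \<one>" using S0 coset_mult_one[OF subgroup.subset[OF DD_sub]] by simp
  have "seq_prods G (S0 + {#g#}) = DD #> (\<one> \<otimes> g)"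
    by (rule full_coset_add[OF S0(1) one_closed S0']) (use g in simp_all)
  then show ?thesis using S0 g by (intro exI[of _ "S0 + {#g#}"]) simp
qed

end


context group begin

lemma Q_carrier_E: "c \<in> carrier (G Mod DD) \<Longrightarrow> \<exists>g\<in>carrier G. c = DD #> g"
  by (auto simp: carrier_FactGroup)

lemma Q_carrier_I: "g \<in> carrier G \<Longrightarrow> DD #> g \<in> carrier (G Mod DD)"
  by (auto simp: carrier_FactGroup)

context
  fixes sf :: "'a set \<Rightarrow> 'a multiset"
  assumes sf: "\<forall>c \<in> carrier (G Mod DD). sf c \<in> seqs G \<and> seq_prods G (sf c) = c"
begin

lemma sf_seqs: "c \<in> carrier (G Mod DD) \<Longrightarrow> sf c \<in> seqs G" using sf by blast
lemma sf_prods: "g \<in> carrier G \<Longrightarrow> seq_prods G (sf (DD #> g)) = DD #> g"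
  using sf Q_carrier_I by blast
lemma sf_seqs': "g \<in> carrier G \<Longrightarrow> sf (DD #> g) \<in> seqs G"
  using sf Q_carrier_I by blast

lemma D1:
  assumes "c \<in> carrier (G Mod DD)" "c' \<in> carrier (G Mod DD)"
  shows "class_add G (seq_class G (sf c)) (seq_class G (sf c')) = seq_class G (sf (c <#> c'))"
proof -
  obtain g g' where g: "g \<in> carrier G" "c = DD #> g" and g': "g' \<in> carrier G" "c' = DD #> g'"
    using assms Q_carrier_E by metis
  have cc: "c <#> c' = DD #> (g \<otimes> g')" using g g' normal.rcos_sum[OF DD_normal] by simp
  have g'in: "g' \<in> seq_prods G (sf c')" using sf_prods[OF g'(1)] g'(2) rcos_self[OF g'(1) DD_sub] by simp
  have p: "seq_prods G (sf c + sf c') = DD #> (g \<otimes> g')"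
    using full_coset_add[OF sf_seqs'[OF g(1)] g(1) sf_prods[OF g(1)] sf_seqs'[OF g'(1)]] g'in g g' by simp
  have gg: "g \<otimes> g' \<in> carrier G" using g g' by simp
  have "seq_equiv G (sf c + sf c') (sf (c <#> c'))"
    using full_coset_equiv[OF _ sf_seqs'[OF gg] gg p sf_prods[OF gg]] sf_seqs'[OF g(1)] sf_seqs'[OF g'(1)] g g' cc
    by simp
  then show ?thesis
    using class_add_eq[OF sf_seqs'[OF g(1)] sf_seqs'[OF g'(1)]] class_eq_iff[OF _ sf_seqs'[OF gg]]
      sf_seqs'[OF g(1)] sf_seqs'[OF g'(1)] g g' cc by simp
qed

lemma D2:
  assumes "c \<in> carrier (G Mod DD)" "c' \<in> carrier (G Mod DD)"
    and eq: "seq_class G (sf c) = seq_class G (sf c')"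
  shows "c = c'"
proof -
  obtain g g' where g: "g \<in> carrier G" "c = DD #> g" and g': "g' \<in> carrier G" "c' = DD #> g'"
    using assms Q_carrier_E by metis
  have e: "seq_equiv G (sf c) (sf c')" using class_eq_iff[OF sf_seqs sf_seqs] assms by simp
  have ig: "inv g \<in> carrier G" using g by simp
  have T: "{#inv g#} \<in> seqs G" "inv g \<in> seq_prods G {#inv g#}" using ig by simp_all
  have "g \<otimes> inv g \<in> DD" using g subgroup.one_closed[OF DD_sub] by simp
  then have "sf c + {#inv g#} \<in> prod_one_seqs G"
    using full_coset_B[OF sf_seqs'[OF g(1)] g(1) sf_prods[OF g(1)] T] g by simp
  moreover have "sf c + {#inv g#} \<in> prod_one_seqs G \<longleftrightarrow> sf c' + {#inv g#} \<in> prod_one_seqs G"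
    using e T(1) unfolding seq_equiv_def by blast
  ultimately have "sf c' + {#inv g#} \<in> prod_one_seqs G" by blast
  then have "g' \<otimes> inv g \<in> DD"
    using full_coset_B[OF sf_seqs'[OF g'(1)] g'(1) sf_prods[OF g'(1)] T] g' by simp
  then have "g' \<in> DD #> g" using subgroup.rcos_module_rev[OF DD_sub is_group g(1) g'(1)] by simp
  then have "DD #> g = DD #> g'" using repr_independence[OF _ g(1) DD_sub] by simp
  then show ?thesis using g g' by simp
qed

lemma D3:
  assumes "c \<in> carrier (G Mod DD)" "s \<in> seqs G"
  shows "seq_class G (s + sf c) \<in> (\<lambda>c. seq_class G (sf c)) ` carrier (G Mod DD)"
proof -
  obtain g where g: "g \<in> carrier G" "c = DD #> g" using assms Q_carrier_E by metis
  obtain t where t: "t \<in> seq_prods G s" using seq_prods_ne by blast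
  have tc: "t \<in> carrier G" using t seq_prods_carrier[OF assms(2)] by blast
  have gt: "g \<otimes> t \<in> carrier G" using g tc by simp
  have p: "seq_prods G (sf c + s) = DD #> (g \<otimes> t)"
    using full_coset_add[OF sf_seqs'[OF g(1)] g(1) sf_prods[OF g(1)] assms(2) t] g by simp
  have "seq_equiv G (sf c + s) (sf (DD #> (g \<otimes> t)))"
    using full_coset_equiv[OF _ sf_seqs'[OF gt] gt p sf_prods[OF gt]] sf_seqs'[OF g(1)] assms(2) g by simp
  then have "seq_class G (s + sf c) = seq_class G (sf (DD #> (g \<otimes> t)))"
    using class_eq_iff[OF _ sf_seqs'[OF gt], of "sf c + s"] sf_seqs'[OF g(1)] assms(2) g
    by (simp add: add.commute)
  then show ?thesis using Q_carrier_I[OF gt] by blast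
qed

end
end


context group begin

abbreviation ZZ where "ZZ \<equiv> grp_center G"

lemma ZZ_carrier: "z \<in> ZZ \<Longrightarrow> z \<in> carrier G" by (simp add: grp_center_def)
lemma ZZ_comm: "z \<in> ZZ \<Longrightarrow> g \<in> carrier G \<Longrightarrow> z \<otimes> g = g \<otimes> z" by (simp add: grp_center_def)
lemma ZZ_one: "\<one> \<in> ZZ" by (simp add: grp_center_def)
lemma ZZ_mult: "z \<in> ZZ \<Longrightarrow> w \<in> ZZ \<Longrightarrow> z \<otimes> w \<in> ZZ"
proof -
  assume z: "z \<in> ZZ" and w: "w \<in> ZZ"
  have zc: "z \<in> carrier G" and wc: "w \<in> carrier G" using z w ZZ_carrier by auto
  have "z \<otimes> w \<otimes> g = g \<otimes> (z \<otimes> w)" if g: "g \<in> carrier G" for g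
  proof -
    have "z \<otimes> w \<otimes> g = z \<otimes> (g \<otimes> w)" using ZZ_comm[OF w g] zc wc g by (simp add: m_assoc)
    also have "\<dots> = (z \<otimes> g) \<otimes> w" using zc wc g by (simp add: m_assoc)
    also have "\<dots> = g \<otimes> (z \<otimes> w)" using ZZ_comm[OF z g] zc wc g by (simp add: m_assoc)
    finally show ?thesis .
  qed
  then show ?thesis using zc wc by (simp add: grp_center_def)
qed
lemma ZZ_inv: "z \<in> ZZ \<Longrightarrow> inv z \<in> ZZ"
proof -
  assume z: "z \<in> ZZ"
  have zc: "z \<in> carrier G" using ZZ_carrier[OF z] .
  have "inv z \<otimes> g = g \<otimes> inv z" if g: "g \<in> carrier G" for g
  proof -
    have e1: "z \<otimes> (inv z \<otimes> g) = g" using zc g by (simp add: m_assoc[symmetric])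
    have "z \<otimes> (g \<otimes> inv z) = (g \<otimes> z) \<otimes> inv z" using ZZ_comm[OF z g] zc g by (simp add: m_assoc[symmetric])
    also have "\<dots> = g" using zc g by (simp add: m_assoc)
    finally have "z \<otimes> (inv z \<otimes> g) = z \<otimes> (g \<otimes> inv z)" using e1 by simp
    then show ?thesis using zc g by (meson inv_closed l_cancel m_closed)
  qed
  then show ?thesis using zc by (simp add: grp_center_def)
qed

lemma Z1:
  assumes z: "z \<in> ZZ" and T: "T \<in> seqs G"
  shows "seq_prods G ({#z#} + T) = (\<lambda>x. z \<otimes> x) ` seq_prods G T"
proof
  have zc: "z \<in> carrier G" using ZZ_carrier[OF z] .
  show "(\<lambda>x. z \<otimes> x) ` seq_prods G T \<subseteq> seq_prods G ({#z#} + T)"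
  proof
    fix y assume "y \<in> (\<lambda>x. z \<otimes> x) ` seq_prods G T"
    then obtain xs where "mset xs = T" "y = z \<otimes> prodl xs" by (auto simp: seq_prods_iff)
    then have "mset (z # xs) = {#z#} + T" "y = prodl (z # xs)" by simp_all
    then show "y \<in> seq_prods G ({#z#} + T)" unfolding seq_prods_iff by blast
  qed
  show "seq_prods G ({#z#} + T) \<subseteq> (\<lambda>x. z \<otimes> x) ` seq_prods G T"
  proof
    fix y assume "y \<in> seq_prods G ({#z#} + T)"
    then obtain ys where ys: "mset ys = {#z#} + T" "y = prodl ys" by (auto simp: seq_prods_iff)
    have "z \<in> set ys" using ys(1) by (metis add_mset_add_single add.commute set_mset_mset union_single_eq_member)
    then obtain ys1 ys2 where sp: "ys = ys1 @ z # ys2" by (meson split_list)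
    have m: "mset (ys1 @ ys2) = T" using ys(1) sp by simp
    have s12: "set ys1 \<subseteq> carrier G" "set ys2 \<subseteq> carrier G"
      using seqs_set[OF T m] by auto
    have "y = prodl ys1 \<otimes> (z \<otimes> prodl ys2)" using ys(2) sp prodl_append[of ys1 "z # ys2"] s12 zc by simp
    also have "\<dots> = z \<otimes> (prodl ys1 \<otimes> prodl ys2)"
      using ZZ_comm[OF z, of "prodl ys1"] s12 zc by (simp add: m_assoc[symmetric])
    also have "\<dots> = z \<otimes> prodl (ys1 @ ys2)" using prodl_append s12 by simp
    finally have "y = z \<otimes> prodl (ys1 @ ys2)" .
    moreover have "prodl (ys1 @ ys2) \<in> seq_prods G T" using m unfolding seq_prods_iff by blast
    ultimately show "y \<in> (\<lambda>x. z \<otimes> x) ` seq_prods G T" by blast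
  qed
qed

lemma Z2:
  assumes "set_mset S \<subseteq> ZZ"
  shows "\<exists>g\<in>ZZ. \<forall>T\<in>seqs G. seq_prods G (S + T) = (\<lambda>x. g \<otimes> x) ` seq_prods G T"
  using assms
proof (induction S)
  case empty
  have "seq_prods G T = (\<lambda>x. \<one> \<otimes> x) ` seq_prods G T" if "T \<in> seqs G" for T
  proof -
    have "\<forall>x\<in>seq_prods G T. \<one> \<otimes> x = x" using seq_prods_carrier[OF that] by auto
    then show ?thesis by (simp add: image_cong)
  qed
  then show ?case using ZZ_one by auto
next
  case (add z S)
  then obtain g where g: "g \<in> ZZ" "\<forall>T\<in>seqs G. seq_prods G (S + T) = (\<lambda>x. g \<otimes> x) ` seq_prods G T"
    by auto
  have z: "z \<in> ZZ" using add(2) by simp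
  have Sseq: "S \<in> seqs G" using add(2) ZZ_carrier by (auto simp: seqs_def)
  have "seq_prods G (add_mset z S + T) = (\<lambda>x. (z \<otimes> g) \<otimes> x) ` seq_prods G T" if T: "T \<in> seqs G" for T
  proof -
    have "seq_prods G (add_mset z S + T) = seq_prods G ({#z#} + (S + T))" by simp
    also have "\<dots> = (\<lambda>x. z \<otimes> x) ` ((\<lambda>x. g \<otimes> x) ` seq_prods G T)"
      using Z1[OF z, of "S + T"] Sseq T g(2) by simp
    also have "\<dots> = (\<lambda>x. (z \<otimes> g) \<otimes> x) ` seq_prods G T"
      using seq_prods_carrier[OF T] ZZ_carrier[OF z] ZZ_carrier[OF g(1)]
      unfolding image_image by (intro image_cong) (auto simp: m_assoc)
    finally show ?thesis .
  qed
  then show ?case using ZZ_mult[OF z g(1)] by blast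
qed

lemma Z_seqs: "set_mset S \<subseteq> ZZ \<Longrightarrow> S \<in> seqs G"
  using ZZ_carrier by (auto simp: seqs_def)

lemma Z_prods:
  assumes "set_mset S \<subseteq> ZZ"
  shows "\<exists>g\<in>ZZ. seq_prods G S = {g} \<and> (\<forall>T\<in>seqs G. seq_prods G (S + T) = (\<lambda>x. g \<otimes> x) ` seq_prods G T)"
proof -
  obtain g where g: "g \<in> ZZ" "\<forall>T\<in>seqs G. seq_prods G (S + T) = (\<lambda>x. g \<otimes> x) ` seq_prods G T"
    using Z2[OF assms] by blast
  have "seq_prods G S = {g}" using g(2)[rule_format, of "{#}"] ZZ_carrier[OF g(1)] by simp
  then show ?thesis using g by blast
qed

lemma Zeq:
  assumes "set_mset S \<subseteq> ZZ" "set_mset S' \<subseteq> ZZ" "x \<in> seq_prods G S" "x \<in> seq_prods G S'"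
  shows "seq_equiv G S S'"
proof -
  obtain g where g: "g \<in> ZZ" "seq_prods G S = {g}" "\<forall>T\<in>seqs G. seq_prods G (S + T) = (\<lambda>x. g \<otimes> x) ` seq_prods G T"
    using Z_prods[OF assms(1)] by blast
  obtain g' where g': "g' \<in> ZZ" "seq_prods G S' = {g'}" "\<forall>T\<in>seqs G. seq_prods G (S' + T) = (\<lambda>x. g' \<otimes> x) ` seq_prods G T"
    using Z_prods[OF assms(2)] by blast
  have "g = g'" using g(2) g'(2) assms(3,4) by simp
  then show ?thesis
    using equiv_by_prods[OF Z_seqs[OF assms(1)] Z_seqs[OF assms(2)]] g(3) g'(3) by simp
qed

end



lemma cs_simps[simp]: "carrier (class_semigroup G) = seq_class G ` seqs G"
  "monoid.mult (class_semigroup G) = class_add G" "one (class_semigroup G) = seq_class G {#}"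
  by (simp_all add: class_semigroup_def)

context group begin

lemma two_list:
  assumes "mset zs = {#a, b#}"
  shows "zs = [a, b] \<or> zs = [b, a]"
proof -
  have "length zs = 2" using assms by (metis size_mset size_add_mset size_empty numeral_2_eq_2 One_nat_def)
  then obtain x y where zs: "zs = [x, y]"
    by (metis (no_types, lifting) One_nat_def Suc_length_conv length_0_conv numeral_2_eq_2)
  then have "{#x, y#} = {#a, b#}" using assms by simp
  then show ?thesis using zs by (auto simp: add_eq_conv_ex)
qed

lemma W_all_one:
  assumes W: "W \<in> seqs G" and e: "seq_equiv G W {#}" and xs: "mset xs = W"
  shows "prodl xs = \<one>"
proof -
  have xsc: "set xs \<subseteq> carrier G" using seqs_set[OF W xs] .
  define y where "y = prodl xs"
  have yc: "y \<in> carrier G" using xsc y_def by simp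
  have "mset (xs @ [inv y]) = W + {#inv y#}" using xs by simp
  moreover have "prodl (xs @ [inv y]) = \<one>" using prodl_append[of xs "[inv y]"] xsc yc y_def by simp
  ultimately have "\<one> \<in> seq_prods G (W + {#inv y#})" unfolding seq_prods_iff by metis
  then have "W + {#inv y#} \<in> prod_one_seqs G" using W yc by (simp add: B_iff)
  moreover have "W + {#inv y#} \<in> prod_one_seqs G \<longleftrightarrow> {#} + {#inv y#} \<in> prod_one_seqs G"
    using e[unfolded seq_equiv_def, rule_format, of "{#inv y#}"] yc by simp
  ultimately have "\<one> \<in> seq_prods G {#inv y#}" by (simp add: B_iff)
  then have "inv y = \<one>" using yc by simp
  then show ?thesis using yc y_def by (metis inv_inv inv_one)
qed

lemma W_central:
  assumes W: "W \<in> seqs G" and e: "seq_equiv G W {#}" and w: "w \<in># W"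
  shows "w \<in> ZZ"
proof -
  obtain W' where W': "W = add_mset w W'" using w by (meson multi_member_split)
  have wc: "w \<in> carrier G" using W W' by simp
  obtain xs' where xs': "mset xs' = W'" using ex_mset by blast
  have xsc: "set xs' \<subseteq> carrier G" using seqs_set[of W' xs'] W W' xs' by simp
  have "prodl (w # xs') = \<one>" using W_all_one[OF W e, of "w # xs'"] W' xs' by simp
  then have pinv: "prodl xs' = inv w" using wc xsc by (simp add: inv_char[symmetric]) (metis inv_equality l_inv_ex wc xsc prodl_closed
      comm_group_def group.inv_comm is_group)
  have "a \<otimes> w = w \<otimes> a" if a: "a \<in> carrier G" for a
  proof -
    define b where "b = inv w \<otimes> a \<otimes> w"
    have bc: "b \<in> carrier G" using a wc b_def by simp
    have "mset ([inv a, w, b] @ xs') = W + {#inv a, b#}" using W' xs' by (simp add: add_mset_commute)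
    moreover have "prodl ([inv a, w, b] @ xs') = \<one>"
    proof -
      have h: "w \<otimes> (inv w \<otimes> a) = a" using a wc by (simp add: m_assoc[symmetric])
      show ?thesis
        using prodl_append[of "[inv a, w, b]" xs'] xsc a wc bc pinv b_def h by (simp add: m_assoc)
    qed
    ultimately have "\<one> \<in> seq_prods G (W + {#inv a, b#})" unfolding seq_prods_iff by metis
    then have "W + {#inv a, b#} \<in> prod_one_seqs G" using W a bc by (simp add: B_iff)
    moreover have "W + {#inv a, b#} \<in> prod_one_seqs G \<longleftrightarrow> {#} + {#inv a, b#} \<in> prod_one_seqs G"
      using e[unfolded seq_equiv_def, rule_format, of "{#inv a, b#}"] a bc by simp
    ultimately have "\<one> \<in> seq_prods G {#inv a, b#}" by (simp add: B_iff)
    then obtain zs where zs: "mset zs = {#inv a, b#}" "prodl zs = \<one>" unfolding seq_prods_iff by metis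
    then have "inv a \<otimes> b = \<one> \<or> b \<otimes> inv a = \<one>" using two_list[OF zs(1)] a bc by auto
    then have "b = a" using a bc by (metis inv_closed inv_equality inv_inv local.inv_comm)
    then have "w \<otimes> (inv w \<otimes> a \<otimes> w) = w \<otimes> a" using b_def by simp
    then show "a \<otimes> w = w \<otimes> a" using a wc by (simp add: m_assoc[symmetric])
  qed
  then show ?thesis using wc by (simp add: grp_center_def)
qed

lemma units_surj:
  assumes A: "A \<in> Units (class_semigroup G)"
  shows "\<exists>z\<in>ZZ. A = seq_class G {#z#}"
proof -
  obtain S B where S: "S \<in> seqs G" "A = seq_class G S" and B: "B \<in> carrier (class_semigroup G)"
    and AB: "class_add G A B = seq_class G {#}"
    using A unfolding Units_def by auto
  obtain T where T: "T \<in> seqs G" "B = seq_class G T" using B by auto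
  have "seq_class G (S + T) = seq_class G {#}" using AB S T class_add_eq by simp
  then have e: "seq_equiv G (S + T) {#}" using class_eq_iff[of "S + T" "{#}"] S T by simp
  have "set_mset S \<subseteq> ZZ"
  proof
    fix w assume "w \<in># S"
    then have "w \<in># S + T" by simp
    then show "w \<in> ZZ" using W_central[OF _ e] S T by simp
  qed
  moreover obtain x where x: "x \<in> seq_prods G S" using seq_prods_ne by blast
  ultimately obtain g where g: "g \<in> ZZ" "seq_prods G S = {g}" using Z_prods by blast
  have "x = g" using x g by simp
  have "seq_equiv G S {#g#}"
    using Zeq[OF \<open>set_mset S \<subseteq> ZZ\<close>, of "{#g#}" g] g ZZ_carrier[OF g(1)] by simp
  then have "A = seq_class G {#g#}" using class_eq_iff[OF S(1), of "{#g#}"] S ZZ_carrier[OF g(1)] by simp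
  then show ?thesis using g by blast
qed

end


context group begin

lemma Z5:
  assumes z: "z \<in> ZZ" and w: "w \<in> ZZ" and eq: "seq_class G {#z#} = seq_class G {#w#}"
  shows "z = w"
proof -
  have zc: "z \<in> carrier G" and wc: "w \<in> carrier G" using z w ZZ_carrier by auto
  have e: "seq_equiv G {#z#} {#w#}" using class_eq_iff[of "{#z#}" "{#w#}"] eq zc wc by simp
  have "z \<otimes> inv z \<in> seq_prods G ({#z#} + {#inv z#})"
    by (rule seq_prods_add) (use zc in simp_all)
  then have "{#z#} + {#inv z#} \<in> prod_one_seqs G" using zc by (simp add: B_iff)
  moreover have "{#z#} + {#inv z#} \<in> prod_one_seqs G \<longleftrightarrow> {#w#} + {#inv z#} \<in> prod_one_seqs G"
    using e[unfolded seq_equiv_def, rule_format, of "{#inv z#}"] zc by simp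
  ultimately have "\<one> \<in> seq_prods G ({#w#} + {#inv z#})" by (simp add: B_iff)
  then have "\<one> = w \<otimes> inv z" using Z1[OF w, of "{#inv z#}"] zc by simp
  then show ?thesis using zc wc by (metis inv_closed inv_equality inv_inv)
qed

lemma class_single_hom:
  assumes x: "x \<in> ZZ" and y: "y \<in> ZZ"
  shows "seq_class G {#x \<otimes> y#} = class_add G (seq_class G {#x#}) (seq_class G {#y#})"
proof -
  have xc: "x \<in> carrier G" and yc: "y \<in> carrier G" using x y ZZ_carrier by auto
  have "x \<otimes> y \<in> seq_prods G ({#x#} + {#y#})" by (rule seq_prods_add) (use xc yc in simp_all)
  moreover have "x \<otimes> y \<in> seq_prods G {#x \<otimes> y#}" using xc yc by simp
  ultimately have "seq_equiv G {#x \<otimes> y#} ({#x#} + {#y#})"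
    using Zeq[of "{#x \<otimes> y#}" "{#x#} + {#y#}" "x \<otimes> y"] ZZ_mult[OF x y] x y by simp
  then show ?thesis using class_add_eq[of "{#x#}" "{#y#}"] class_eq_iff[of "{#x \<otimes> y#}" "{#x#} + {#y#}"] xc yc
    by simp
qed

lemma class_single_unit:
  assumes z: "z \<in> ZZ"
  shows "seq_class G {#z#} \<in> Units (class_semigroup G)"
proof -
  have zc: "z \<in> carrier G" using z ZZ_carrier by auto
  have iz: "inv z \<in> ZZ" using ZZ_inv[OF z] .
  have c: "seq_class G {#inv z#} \<in> carrier (class_semigroup G)" "seq_class G {#z#} \<in> carrier (class_semigroup G)"
    using zc by auto
  have a1: "class_add G (seq_class G {#inv z#}) (seq_class G {#z#}) = seq_class G {#}"
  proof -
    have "inv z \<otimes> z \<in> seq_prods G ({#inv z#} + {#z#})" by (rule seq_prods_add) (use zc in simp_all)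
    then have "seq_equiv G ({#inv z#} + {#z#}) {#}"
      using Zeq[of "{#inv z#} + {#z#}" "{#}" \<one>] iz z zc by simp
    then show ?thesis using class_add_eq[of "{#inv z#}" "{#z#}"] class_eq_iff[of "{#inv z#} + {#z#}" "{#}"] zc by simp
  qed
  have a2: "class_add G (seq_class G {#z#}) (seq_class G {#inv z#}) = seq_class G {#}"
  proof -
    have "z \<otimes> inv z \<in> seq_prods G ({#z#} + {#inv z#})" by (rule seq_prods_add) (use zc in simp_all)
    then have "seq_equiv G ({#z#} + {#inv z#}) {#}"
      using Zeq[of "{#z#} + {#inv z#}" "{#}" \<one>] iz z zc by simp
    then show ?thesis using class_add_eq[of "{#z#}" "{#inv z#}"] class_eq_iff[of "{#z#} + {#inv z#}" "{#}"] zc by simp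
  qed
  show ?thesis unfolding Units_def
    by (intro CollectI conjI bexI[of _ "seq_class G {#inv z#}"]) (use c a1 a2 in simp_all)
qed

lemma part2: "(\<lambda>g. seq_class G {#g#}) \<in> iso (G\<lparr>carrier := grp_center G\<rparr>) (units_of (class_semigroup G))"
  unfolding iso_def
proof (intro CollectI conjI)
  show "(\<lambda>g. seq_class G {#g#}) \<in> hom (G\<lparr>carrier := grp_center G\<rparr>) (units_of (class_semigroup G))"
  proof -
    have "(\<lambda>g. seq_class G {#g#}) \<in> carrier (G\<lparr>carrier := ZZ\<rparr>) \<rightarrow> carrier (units_of (class_semigroup G))"
      using class_single_unit by (simp add: units_of_def Pi_def)
    moreover have "\<forall>x\<in>carrier (G\<lparr>carrier := ZZ\<rparr>). \<forall>y\<in>carrier (G\<lparr>carrier := ZZ\<rparr>).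
       seq_class G {#x \<otimes>\<^bsub>G\<lparr>carrier := ZZ\<rparr>\<^esub> y#} = seq_class G {#x#} \<otimes>\<^bsub>units_of (class_semigroup G)\<^esub> seq_class G {#y#}"
      using class_single_hom by (simp add: units_of_def)
    ultimately show ?thesis unfolding hom_def by blast
  qed
  show "bij_betw (\<lambda>g. seq_class G {#g#}) (carrier (G\<lparr>carrier := grp_center G\<rparr>)) (carrier (units_of (class_semigroup G)))"
    unfolding bij_betw_def
  proof (intro conjI)
    show "inj_on (\<lambda>g. seq_class G {#g#}) (carrier (G\<lparr>carrier := ZZ\<rparr>))"
    proof (rule inj_onI)
      fix x y assume "x \<in> carrier (G\<lparr>carrier := ZZ\<rparr>)" "y \<in> carrier (G\<lparr>carrier := ZZ\<rparr>)"
        "seq_class G {#x#} = seq_class G {#y#}"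
      then show "x = y" using Z5[of x y] by simp
    qed
    show "(\<lambda>g. seq_class G {#g#}) ` carrier (G\<lparr>carrier := ZZ\<rparr>) = carrier (units_of (class_semigroup G))"
    proof
      show "(\<lambda>g. seq_class G {#g#}) ` carrier (G\<lparr>carrier := ZZ\<rparr>) \<subseteq> carrier (units_of (class_semigroup G))"
        using class_single_unit by (auto simp: units_of_def)
      show "carrier (units_of (class_semigroup G)) \<subseteq> (\<lambda>g. seq_class G {#g#}) ` carrier (G\<lparr>carrier := ZZ\<rparr>)"
      proof
        fix A assume "A \<in> carrier (units_of (class_semigroup G))"
        then have "A \<in> Units (class_semigroup G)" by (simp add: units_of_def)
        then obtain z where "z \<in> ZZ" "A = seq_class G {#z#}" using units_surj by blast
        then show "A \<in> (\<lambda>g. seq_class G {#g#}) ` carrier (G\<lparr>carrier := ZZ\<rparr>)" by simp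
      qed
    qed
  qed
qed

end


context group begin

lemma part1:
  assumes sf: "\<forall>c \<in> carrier (G Mod DD). sf c \<in> seqs G \<and> seq_prods G (sf c) = c"
  shows "let cl = (\<lambda>c. seq_class G (sf c)) ` carrier (G Mod DD);
               hh = \<lparr>carrier = cl, monoid.mult = class_add G,
                    one = seq_class G (sf DD)\<rparr>
           in cl \<subseteq> carrier (class_semigroup G)
              \<and> group hh
              \<and> (\<lambda>c. seq_class G (sf c)) \<in> iso (G Mod DD) hh
              \<and> (\<forall>c \<in> carrier (G Mod DD). \<forall>s \<in> seqs G.
                   seq_class G (s + sf c) \<in> cl)"
proof -
  interpret Q: group "G Mod DD" by (rule derived_quot_is_group)
  define f where "f = (\<lambda>c. seq_class G (sf c))"
  define cl where "cl = f ` carrier (G Mod DD)"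
  define hh where "hh = \<lparr>carrier = cl, monoid.mult = class_add G, one = seq_class G (sf DD)\<rparr>"
  have hh_simps: "carrier hh = cl" "monoid.mult hh = class_add G" "one hh = f DD"
    by (simp_all add: hh_def f_def)
  have mult: "class_add G (f c) (f c') = f (c \<otimes>\<^bsub>G Mod DD\<^esub> c')"
    if "c \<in> carrier (G Mod DD)" "c' \<in> carrier (G Mod DD)" for c c'
    using D1[OF sf that] by (simp add: f_def)
  have oneQ: "\<one>\<^bsub>G Mod DD\<^esub> = DD" by simp
  have c1: "cl \<subseteq> carrier (class_semigroup G)"
    using sf unfolding cl_def f_def by auto
  have grp: "group hh"
  proof (rule groupI)
    fix x y assume "x \<in> carrier hh" "y \<in> carrier hh"
    then obtain c c' where c: "c \<in> carrier (G Mod DD)" "x = f c" and c': "c' \<in> carrier (G Mod DD)" "y = f c'"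
      unfolding hh_simps cl_def by blast
    show "x \<otimes>\<^bsub>hh\<^esub> y \<in> carrier hh"
      unfolding hh_simps cl_def using mult[OF c(1) c'(1)] c c' Q.m_closed[OF c(1) c'(1)] by simp
  next
    show "\<one>\<^bsub>hh\<^esub> \<in> carrier hh" unfolding hh_simps cl_def using Q.one_closed oneQ by (metis image_eqI)
  next
    fix x y z assume "x \<in> carrier hh" "y \<in> carrier hh" "z \<in> carrier hh"
    then obtain a b c where a: "a \<in> carrier (G Mod DD)" "x = f a" and b: "b \<in> carrier (G Mod DD)" "y = f b"
      and c: "c \<in> carrier (G Mod DD)" "z = f c"
      unfolding hh_simps cl_def by blast
    show "x \<otimes>\<^bsub>hh\<^esub> y \<otimes>\<^bsub>hh\<^esub> z = x \<otimes>\<^bsub>hh\<^esub> (y \<otimes>\<^bsub>hh\<^esub> z)"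
      unfolding hh_simps a(2) b(2) c(2)
      using mult a(1) b(1) c(1) Q.m_closed Q.m_assoc by metis
  next
    fix x assume "x \<in> carrier hh"
    then obtain c where c: "c \<in> carrier (G Mod DD)" "x = f c" unfolding hh_simps cl_def by blast
    show "\<one>\<^bsub>hh\<^esub> \<otimes>\<^bsub>hh\<^esub> x = x"
      unfolding hh_simps c(2) using mult[OF Q.one_closed c(1)] Q.l_one[OF c(1)] oneQ by simp
  next
    fix x assume "x \<in> carrier hh"
    then obtain c where c: "c \<in> carrier (G Mod DD)" "x = f c" unfolding hh_simps cl_def by blast
    have "f (inv\<^bsub>G Mod DD\<^esub> c) \<in> carrier hh" unfolding hh_simps cl_def using Q.inv_closed[OF c(1)] by blast
    moreover have "f (inv\<^bsub>G Mod DD\<^esub> c) \<otimes>\<^bsub>hh\<^esub> x = \<one>\<^bsub>hh\<^esub>"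
      unfolding hh_simps c(2) using mult[OF Q.inv_closed[OF c(1)] c(1)] Q.l_inv[OF c(1)] oneQ by simp
    ultimately show "\<exists>y\<in>carrier hh. y \<otimes>\<^bsub>hh\<^esub> x = \<one>\<^bsub>hh\<^esub>" by blast
  qed
  have iso: "f \<in> iso (G Mod DD) hh"
    unfolding iso_def
  proof (intro CollectI conjI)
    have "f \<in> carrier (G Mod DD) \<rightarrow> carrier hh" unfolding hh_simps cl_def by blast
    moreover have "\<forall>x\<in>carrier (G Mod DD). \<forall>y\<in>carrier (G Mod DD). f (x \<otimes>\<^bsub>G Mod DD\<^esub> y) = f x \<otimes>\<^bsub>hh\<^esub> f y"
      unfolding hh_simps using mult by simp
    ultimately show "f \<in> hom (G Mod DD) hh" unfolding hom_def by blast
    have "inj_on f (carrier (G Mod DD))"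
    proof (rule inj_onI)
      fix x y assume "x \<in> carrier (G Mod DD)" "y \<in> carrier (G Mod DD)" "f x = f y"
      then show "x = y" using D2[OF sf] unfolding f_def by blast
    qed
    then show "bij_betw f (carrier (G Mod DD)) (carrier hh)"
      unfolding bij_betw_def hh_simps cl_def by blast
  qed
  have d3: "\<forall>c \<in> carrier (G Mod DD). \<forall>s \<in> seqs G. seq_class G (s + sf c) \<in> cl"
    using D3[OF sf] unfolding cl_def f_def by blast
  show ?thesis unfolding Let_def
    using c1 grp iso d3 unfolding hh_def cl_def f_def by blast
qed

end

theorem theorem3p8:
  fixes G :: "('a, 'b) monoid_scheme"
  assumes "group G" and "finite (carrier G)"
  shows "(\<forall>c \<in> carrier (G Mod commutator_subgroup G). \<exists>s \<in> seqs G. seq_prods G s = c)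
    \<and> (\<forall>sf. (\<forall>c \<in> carrier (G Mod commutator_subgroup G).
                 sf c \<in> seqs G \<and> seq_prods G (sf c) = c) \<longrightarrow>
          (let cl = (\<lambda>c. seq_class G (sf c)) ` carrier (G Mod commutator_subgroup G);
               hh = \<lparr>carrier = cl, monoid.mult = class_add G,
                    one = seq_class G (sf (commutator_subgroup G))\<rparr>
           in cl \<subseteq> carrier (class_semigroup G)
              \<and> group hh
              \<and> (\<lambda>c. seq_class G (sf c)) \<in> iso (G Mod commutator_subgroup G) hh
              \<and> (\<forall>c \<in> carrier (G Mod commutator_subgroup G). \<forall>s \<in> seqs G.
                   seq_class G (s + sf c) \<in> cl)))
    \<and> (\<lambda>g. seq_class G {#g#}) \<in> iso (G\<lparr>carrier := grp_center G\<rparr>) (units_of (class_semigroup G))"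
proof -
  interpret group G by fact
  have P1: "\<forall>c \<in> carrier (G Mod commutator_subgroup G). \<exists>s \<in> seqs G. seq_prods G s = c"
  proof
    fix c assume "c \<in> carrier (G Mod commutator_subgroup G)"
    then show "\<exists>s \<in> seqs G. seq_prods G s = c" using Q_carrier_E exists_coset_seq[OF assms(2)] by metis
  qed
  show ?thesis using P1 part1 part2 by blast
qed


end
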